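(* Let $X=X_\Sigma$ be the projective toric manifold described in the context, and suppose $p_2\ge2$ and $p_3\ge2$. Let $S$ be the torus invariant surface associated to the $(d-2)$-dimensional cone of $\Sigma$ generated by all ray generators except $v_1,z_1,z_2,t_1,t_2$. Then $S\cong\mathbb{P}^1\times\mathbb{P}^1$ and $(\mathrm{ch}_2(X)\cdot S)=-p_1-p_4<0$.
   Context: Let $N=\mathbb{Z}^d$ and let $\Sigma$ be a smooth projective complete fan in $N_\mathbb{R}$ whose set of primitive ray generators is $\{v_1,\dots,v_{p_0},y_1,\dots,y_{p_1},z_1,\dots,z_{p_2},t_1,\dots,t_{p_3},u_1,\dots,u_{p_4}\}$, where $p_0,\dots,p_4$ are positive integers with $p_0+p_1+p_2+p_3+p_4-3=d$. A primitive collection is a set of ray generators not generating a cone of $\Sigma$ while every proper subset does. The primitive collections of $\Sigma$ are exactly $\{v_i\}\cup\{y_j\}$, $\{y_j\}\cup\{z_j\}$, $\{z_j\}\cup\{t_j\}$, $\{t_j\}\cup\{u_j\}$, $\{u_j\}\cup\{v_j\}$ (all elements of the indicated groups), with primitive relations $v_1+\cdots+v_{p_0}+y_1+\cdots+y_{p_1}=c_2z_2+\cdots+c_{p_2}z_{p_2}+(b_1+1)t_1+\cdots+(b_{p_3}+1)t_{p_3}$, $y_1+\cdots+y_{p_1}+z_1+\cdots+z_{p_2}=u_1+\cdots+u_{p_4}$, $z_1+\cdots+z_{p_2}+t_1+\cdots+t_{p_3}=0$, $t_1+\cdots+t_{p_3}+u_1+\cdots+u_{p_4}=y_1+\cdots+y_{p_1}$,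 $u_1+\cdots+u_{p_4}+v_1+\cdots+v_{p_0}=c_2z_2+\cdots+c_{p_2}z_{p_2}+b_1t_1+\cdots+b_{p_3}t_{p_3}$, with $b_i,c_j\in\mathbb{Z}_{\ge0}$, and $c_2=\min_j c_j$, $b_1=\min_i b_i$. $X=X_\Sigma$. With $D_1,\dots,D_n$ the torus invariant prime divisors, $\mathrm{ch}_2(X)=\frac12\sum D_i^2$. *)

theory Defs
  imports "HOL-Analysis.Analysis"
begin

datatype ray = V nat | Y nat | Z nat | T nat | U nat

definition Vs :: "nat \<Rightarrow> ray set" where "Vs p = V ` {1..p}"
definition Ys :: "nat \<Rightarrow> ray set" where "Ys p = Y ` {1..p}"
definition Zs :: "nat \<Rightarrow> ray set" where "Zs p = Z ` {1..p}"
definition Ts :: "nat \<Rightarrow> ray set" where "Ts p = T ` {1..p}"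
definition Us :: "nat \<Rightarrow> ray set" where "Us p = U ` {1..p}"

definition allrays :: "nat \<Rightarrow> nat \<Rightarrow> nat \<Rightarrow> nat \<Rightarrow> nat \<Rightarrow> ray set" where
  "allrays p0 p1 p2 p3 p4 = Vs p0 \<union> Ys p1 \<union> Zs p2 \<union> Ts p3 \<union> Us p4"

definition ipair :: "int^'d \<Rightarrow> int^'d \<Rightarrow> int" where
  "ipair m v = (\<Sum>i\<in>UNIV. m$i * v$i)"

definition rvec :: "int^'d \<Rightarrow> real^'d" where
  "rvec v = (\<chi> i. real_of_int (v$i))"

definition cone_of :: "(ray \<Rightarrow> int^'d) \<Rightarrow> ray set \<Rightarrow> (real^'d) set" where
  "cone_of g \<sigma> = {\<Sum>k\<in>\<sigma>. c k *\<^sub>R rvec (g k) | c. \<forall>k. c k \<ge> 0}"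

definition zspan :: "(int^'d) set \<Rightarrow> (int^'d) set" where
  "zspan A = {\<Sum>a\<in>A. c a *s a | c. True}"

definition unimodular :: "(ray \<Rightarrow> int^'d) \<Rightarrow> ray set \<Rightarrow> bool" where
  "unimodular g \<sigma> \<longleftrightarrow> inj_on g \<sigma> \<and>
     (\<exists>B :: int^'d^'d. (det B = 1 \<or> det B = -1) \<and> g ` \<sigma> \<subseteq> {B$i | i. True})"

text \<open>K is the set of (sets of rays generating) cones of a smooth, complete, projective
  simplicial fan with ray set R and primitive ray generators g.\<close>
definition smooth_projective_complete_fan ::
  "ray set \<Rightarrow> ray set set \<Rightarrow> (ray \<Rightarrow> int^'d) \<Rightarrow> bool" where
  "smooth_projective_complete_fan R K g \<longleftrightarrow>
     finite R \<and> inj_on g R \<and>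
     {} \<in> K \<and> (\<forall>\<sigma>\<in>K. \<sigma> \<subseteq> R) \<and> (\<forall>\<sigma>\<in>K. \<forall>\<sigma>'. \<sigma>' \<subseteq> \<sigma> \<longrightarrow> \<sigma>' \<in> K) \<and>
     (\<forall>k\<in>R. {k} \<in> K) \<and>
     (\<forall>\<sigma>\<in>K. unimodular g \<sigma>) \<and>
     (\<forall>\<sigma>\<in>K. \<forall>\<sigma>'\<in>K. cone_of g \<sigma> \<inter> cone_of g \<sigma>' = cone_of g (\<sigma> \<inter> \<sigma>')) \<and>
     (\<Union>\<sigma>\<in>K. cone_of g \<sigma>) = UNIV \<and>
     (\<exists>\<phi> :: ray \<Rightarrow> real. \<forall>\<sigma>\<in>K. card \<sigma> = CARD('d) \<longrightarrow>
        (\<exists>m :: real^'d. (\<forall>k\<in>\<sigma>. m \<bullet> rvec (g k) = \<phi> k) \<and>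
                        (\<forall>k\<in>R - \<sigma>. m \<bullet> rvec (g k) > \<phi> k)))"

definition primitive_collection :: "ray set \<Rightarrow> ray set set \<Rightarrow> ray set \<Rightarrow> bool" where
  "primitive_collection R K C \<longleftrightarrow> C \<subseteq> R \<and> C \<notin> K \<and> (\<forall>x\<in>C. C - {x} \<in> K)"

text \<open>For a cone \<tau> and a ray \<rho> in \<tau>: a character m with <m,g \<rho>> = 1 and
  <m,g j> = 0 for the other rays j of \<tau> (exists by smoothness).\<close>
definition dualm :: "(ray \<Rightarrow> int^'d) \<Rightarrow> ray set \<Rightarrow> ray \<Rightarrow> int^'d" where
  "dualm g \<tau> \<rho> = (SOME m. ipair m (g \<rho>) = 1 \<and> (\<forall>j\<in>\<tau> - {\<rho>}. ipair m (g j) = 0))"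

text \<open>Coefficients of a divisor linearly equivalent to D_\<rho> whose support avoids
  the divisors D_j, j \<in> \<tau>  (D_\<rho> itself if \<rho> \<notin> \<tau>; else D_\<rho> - div(\<chi>^m)).\<close>
definition restr :: "(ray \<Rightarrow> int^'d) \<Rightarrow> ray set \<Rightarrow> ray \<Rightarrow> ray \<Rightarrow> int" where
  "restr g \<tau> \<rho> k =
     (if \<rho> \<notin> \<tau> then (if k = \<rho> then 1 else 0)
      else if k \<in> \<tau> then 0 else - ipair (dualm g \<tau> \<rho>) (g k))"

text \<open>(D_\<rho> . V(\<gamma>)) for a (d-1)-dimensional cone \<gamma> (a torus invariant curve).\<close>
definition curve_deg :: "ray set \<Rightarrow> ray set set \<Rightarrow> (ray \<Rightarrow> int^'d) \<Rightarrow> ray set \<Rightarrow> ray \<Rightarrow> int" where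
  "curve_deg R K g \<gamma> \<rho> = (\<Sum>k\<in>R - \<gamma>. restr g \<gamma> \<rho> k * (if insert k \<gamma> \<in> K then 1 else 0))"

text \<open>(D_\<rho> . D_\<rho>' . V(\<tau>)) for a (d-2)-dimensional cone \<tau> (a torus invariant surface).\<close>
definition surf_int :: "ray set \<Rightarrow> ray set set \<Rightarrow> (ray \<Rightarrow> int^'d) \<Rightarrow> ray set \<Rightarrow> ray \<Rightarrow> ray \<Rightarrow> int" where
  "surf_int R K g \<tau> \<rho> \<rho>' =
     (\<Sum>k\<in>R - \<tau>. restr g \<tau> \<rho> k * (if insert k \<tau> \<in> K then curve_deg R K g (insert k \<tau>) \<rho>' else 0))"

text \<open>(ch_2(X) . V(\<tau>)) with ch_2(X) = 1/2 \<Sum> D_i^2.\<close>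
definition ch2_dot :: "ray set \<Rightarrow> ray set set \<Rightarrow> (ray \<Rightarrow> int^'d) \<Rightarrow> ray set \<Rightarrow> real" where
  "ch2_dot R K g \<tau> = (1/2) * (\<Sum>\<rho>\<in>R. real_of_int (surf_int R K g \<tau> \<rho> \<rho>))"

text \<open>The fan of V(\<tau>) is the star of \<tau> in the quotient lattice N / N_\<tau>.
  We require a lattice isomorphism N / N_\<tau> \<cong> Z^2 (given by a surjective map
  v \<mapsto> (<m1,v>,<m2,v>) with kernel the Z-span of the generators of \<tau>) carrying the
  star fan onto the fan of P^1 x P^1 (rays \<plusminus>e1, \<plusminus>e2, maximal cones the four quadrants).\<close>
definition surface_is_P1xP1 :: "ray set \<Rightarrow> ray set set \<Rightarrow> (ray \<Rightarrow> int^'d) \<Rightarrow> ray set \<Rightarrow> bool" where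
  "surface_is_P1xP1 R K g \<tau> \<longleftrightarrow> \<tau> \<in> K \<and>
     (\<exists>m1 m2 :: int^'d.
        let \<phi> = (\<lambda>v. (ipair m1 v, ipair m2 v));
            star = {k\<in>R - \<tau>. insert k \<tau> \<in> K}
        in (\<forall>w. \<exists>v. \<phi> v = w) \<and>
           {v. \<phi> v = (0,0)} = zspan (g ` \<tau>) \<and>
           bij_betw (\<phi> \<circ> g) star {(1,0),(0,1),(-1,0),(0,-1)} \<and>
           (\<forall>k\<in>star. \<forall>k'\<in>star. k \<noteq> k' \<longrightarrow>
              ({k,k'} \<union> \<tau> \<in> K \<longleftrightarrow> \<phi> (g k) \<noteq> - \<phi> (g k'))))"

end

theory Submission
  imports Defs
begin


lemma det_of_int_mat:
  fixes A :: "int^'n^'n"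
  shows "det ((\<chi> i j. real_of_int (A$i$j)) :: real^'n^'n) = real_of_int (det A)"
  unfolding det_def by (simp add: of_int_sum of_int_prod)

lemma of_int_matmul:
  fixes A B :: "int^'n^'n"
  shows "real_of_int ((A ** B)$i$j) = ((\<chi> i j. real_of_int (A$i$j)) ** (\<chi> i j. real_of_int (B$i$j)) :: real^'n^'n)$i$j"
  by (simp add: matrix_matrix_mult_def of_int_sum)

lemma int_inverse:
  fixes B :: "int^'n^'n"
  assumes d: "det B = 1 \<or> det B = -1"
  shows "\<exists>M. B ** M = mat 1 \<and> M ** B = mat 1"
proof -
  define Br :: "real^'n^'n" where "Br = (\<chi> i j. real_of_int (B$i$j))"
  define C where "C = (\<lambda>i k. (\<chi> a c. if c = k then (if a = i then 1 else 0) else B$a$c) :: int^'n^'n)"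
  define M :: "int^'n^'n" where "M = (\<chi> k i. det B * det (C i k))"
  define Mr :: "real^'n^'n" where "Mr = (\<chi> i j. real_of_int (M$i$j))"
  have dBr: "det Br = real_of_int (det B)" unfolding Br_def by (rule det_of_int_mat)
  have dnz: "det Br \<noteq> 0" using d dBr by auto
  have col: "Br *v (\<chi> k. Mr$k$i) = (\<chi> a. if a = i then 1 else 0)" for i
  proof -
    let ?b = "(\<chi> a. if a = i then 1 else 0) :: real^'n"
    have "(\<chi> k. Mr$k$i) = (\<chi> k. det(\<chi> a c. if c=k then ?b$a else Br$a$c) / det Br)"
    proof (rule vec_eq_iff[THEN iffD2], rule allI)
      fix k
      have e: "(\<chi> a c. if c=k then ?b$a else Br$a$c) = (\<chi> a c. real_of_int ((C i k)$a$c))"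
        unfolding C_def Br_def by (simp add: vec_eq_iff)
      have "det(\<chi> a c. if c=k then ?b$a else Br$a$c) = real_of_int (det (C i k))"
        unfolding e by (rule det_of_int_mat)
      then show "(\<chi> k. Mr$k$i)$k = (\<chi> k. det(\<chi> a c. if c=k then ?b$a else Br$a$c) / det Br)$k"
        using d unfolding Mr_def M_def dBr by auto
    qed
    then show ?thesis using cramer[OF dnz, of "(\<chi> k. Mr$k$i)" ?b] by simp
  qed
  have BM: "Br ** Mr = mat 1"
  proof -
    have "(Br ** Mr)$j$i = (mat 1 :: real^'n^'n)$j$i" for i j
    proof -
      have "(Br ** Mr)$j$i = (Br *v (\<chi> k. Mr$k$i))$j"
        by (simp add: matrix_matrix_mult_def matrix_vector_mult_def)
      then show ?thesis using col[of i] by (simp add: mat_def)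
    qed
    then show ?thesis by (simp add: vec_eq_iff)
  qed
  then have MB: "Mr ** Br = mat 1" using matrix_left_right_inverse by blast
  have "B ** M = mat 1"
  proof -
    have "real_of_int ((B ** M)$i$j) = real_of_int ((mat 1 :: int^'n^'n)$i$j)" for i j
      using of_int_matmul[of B M i j] BM unfolding Br_def Mr_def by (simp add: mat_def)
    then show ?thesis by (simp add: vec_eq_iff)
  qed
  moreover have "M ** B = mat 1"
  proof -
    have "real_of_int ((M ** B)$i$j) = real_of_int ((mat 1 :: int^'n^'n)$i$j)" for i j
      using of_int_matmul[of M B i j] MB unfolding Br_def Mr_def by (simp add: mat_def)
    then show ?thesis by (simp add: vec_eq_iff)
  qed
  ultimately show ?thesis by blast
qed


lemma ipair_sum: "ipair m (sum f A) = (\<Sum>a\<in>A. ipair m (f a))"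
  unfolding ipair_def by (simp add: sum_distrib_left sum.swap[of _ UNIV A])

lemma ipair_scale: "ipair m (c *s v) = c * ipair m v"
  unfolding ipair_def by (simp add: sum_distrib_left mult.assoc mult.left_commute)

lemma ipair_add: "ipair m (v + w) = ipair m v + ipair m w"
  unfolding ipair_def by (simp add: distrib_left sum.distrib)

lemma ipair_zero: "ipair m 0 = 0"
  unfolding ipair_def by simp

lemma dual_basis:
  fixes g :: "ray \<Rightarrow> int^'d"
  assumes u: "unimodular g \<sigma>"
  shows "\<exists>m. (\<forall>k\<in>\<sigma>. \<forall>j\<in>\<sigma>. ipair (m k) (g j) = (if j = k then 1 else 0)) \<and>
             (card \<sigma> = CARD('d) \<longrightarrow> (\<forall>v. v = (\<Sum>k\<in>\<sigma>. ipair (m k) v *s g k)))"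
proof -
  from u obtain B :: "int^'d^'d" where inj: "inj_on g \<sigma>" and dB: "det B = 1 \<or> det B = -1"
    and sub: "g ` \<sigma> \<subseteq> {B$i | i. True}" unfolding unimodular_def by blast
  obtain M where BM: "B ** M = mat 1" and MB: "M ** B = mat 1" using int_inverse[OF dB] by blast
  define r where "r = (\<lambda>k. SOME i. B$i = g k)"
  have r: "B $ (r k) = g k" if "k \<in> \<sigma>" for k
    using sub that unfolding r_def by (metis (mono_tags, lifting) image_eqI mem_Collect_eq someI_ex subsetD)
  define m where "m = (\<lambda>k. (\<chi> a. M$a$(r k)) :: int^'d)"
  have ip: "ipair (m k) (B$i) = (B ** M)$i$(r k)" for k i
    unfolding ipair_def m_def matrix_matrix_mult_def by (simp add: mult.commute)
  have rinj: "inj_on r \<sigma>" using inj r by (metis inj_on_def)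
  have P1: "\<forall>k\<in>\<sigma>. \<forall>j\<in>\<sigma>. ipair (m k) (g j) = (if j = k then 1 else 0)"
  proof (intro ballI)
    fix k j assume k: "k \<in> \<sigma>" and j: "j \<in> \<sigma>"
    have "ipair (m k) (g j) = (B ** M)$(r j)$(r k)" using ip r[OF j] by metis
    also have "\<dots> = (if r j = r k then 1 else 0)" using BM by (simp add: mat_def)
    also have "\<dots> = (if j = k then 1 else 0)" using rinj k j by (auto simp: inj_on_def)
    finally show "ipair (m k) (g j) = (if j = k then 1 else 0)" .
  qed
  have P2: "\<forall>v. v = (\<Sum>k\<in>\<sigma>. ipair (m k) v *s g k)" if c: "card \<sigma> = CARD('d)"
  proof
    fix v :: "int^'d"
    have fin: "finite \<sigma>" using c card_ge_0_finite[of \<sigma>] by simp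
    have img: "r ` \<sigma> = UNIV"
      by (metis card_image card_subset_eq c finite subset_UNIV rinj)
    have "v = (\<Sum>i\<in>UNIV. (\<Sum>a\<in>UNIV. M$a$i * v$a) *s B$i)"
    proof -
      have "(\<Sum>i\<in>UNIV. (\<Sum>a\<in>UNIV. M$a$i * v$a) *s B$i)$l = v$l" for l
      proof -
        have "(\<Sum>i\<in>UNIV. (\<Sum>a\<in>UNIV. M$a$i * v$a) *s B$i)$l
              = (\<Sum>i\<in>UNIV. \<Sum>a\<in>UNIV. M$a$i * v$a * B$i$l)"
          by (simp add: sum_distrib_right)
        also have "\<dots> = (\<Sum>a\<in>UNIV. v$a * (\<Sum>i\<in>UNIV. M$a$i * B$i$l))"
          by (subst sum.swap) (simp add: sum_distrib_left mult.commute mult.left_commute)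
        also have "\<dots> = (\<Sum>a\<in>UNIV. v$a * (M ** B)$a$l)"
          by (simp add: matrix_matrix_mult_def)
        also have "\<dots> = v$l" using MB by (simp add: mat_def if_distrib cong: if_cong)
        finally show ?thesis .
      qed
      then show ?thesis by (simp add: vec_eq_iff)
    qed
    also have "\<dots> = (\<Sum>k\<in>\<sigma>. (\<Sum>a\<in>UNIV. M$a$(r k) * v$a) *s B$(r k))"
      by (subst img[symmetric], subst sum.reindex[OF rinj]) simp
    also have "\<dots> = (\<Sum>k\<in>\<sigma>. ipair (m k) v *s g k)"
      by (rule sum.cong) (auto simp: r m_def ipair_def)
    finally show "v = (\<Sum>k\<in>\<sigma>. ipair (m k) v *s g k)" .
  qed
  show ?thesis using P1 P2 by blast
qed


lemma fan_D:
  fixes g :: "ray \<Rightarrow> int^'d"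
  assumes "smooth_projective_complete_fan R K g"
  shows "finite R" "inj_on g R" "{} \<in> K" "\<And>\<sigma>. \<sigma> \<in> K \<Longrightarrow> \<sigma> \<subseteq> R"
    "\<And>\<sigma> \<sigma>'. \<sigma> \<in> K \<Longrightarrow> \<sigma>' \<subseteq> \<sigma> \<Longrightarrow> \<sigma>' \<in> K"
    "\<And>\<sigma>. \<sigma> \<in> K \<Longrightarrow> unimodular g \<sigma>"
proof -
  have H: "finite R \<and> inj_on g R \<and> {} \<in> K \<and> (\<forall>\<sigma>\<in>K. \<sigma> \<subseteq> R) \<and>
    (\<forall>\<sigma>\<in>K. \<forall>\<sigma>'. \<sigma>' \<subseteq> \<sigma> \<longrightarrow> \<sigma>' \<in> K) \<and> (\<forall>\<sigma>\<in>K. unimodular g \<sigma>)"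
    using assms unfolding smooth_projective_complete_fan_def by (elim conjE) (intro conjI; assumption)
  then show "finite R" "inj_on g R" "{} \<in> K" "\<And>\<sigma>. \<sigma> \<in> K \<Longrightarrow> \<sigma> \<subseteq> R"
    "\<And>\<sigma> \<sigma>'. \<sigma> \<in> K \<Longrightarrow> \<sigma>' \<subseteq> \<sigma> \<Longrightarrow> \<sigma>' \<in> K"
    "\<And>\<sigma>. \<sigma> \<in> K \<Longrightarrow> unimodular g \<sigma>" by blast+
qed

lemma Kchar:
  fixes g :: "ray \<Rightarrow> int^'d"
  assumes fan: "smooth_projective_complete_fan R K g"
    and prim: "\<And>C. primitive_collection R K C \<longleftrightarrow> C \<in> P"
    and S: "S \<subseteq> R"
  shows "S \<in> K \<longleftrightarrow> (\<forall>C\<in>P. \<not> C \<subseteq> S)"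
proof -
  note fin = fan_D(1)[OF fan]
  note down = fan_D(5)[OF fan]
  show ?thesis
  proof
    assume "S \<in> K"
    show "\<forall>C\<in>P. \<not> C \<subseteq> S"
    proof (intro ballI notI)
      fix C assume "C \<in> P" "C \<subseteq> S"
      then have "C \<notin> K" using prim[of C] unfolding primitive_collection_def by simp
      with down[OF \<open>S \<in> K\<close> \<open>C \<subseteq> S\<close>] show False by blast
    qed
  next
    assume H: "\<forall>C\<in>P. \<not> C \<subseteq> S"
    show "S \<in> K"
    proof (rule ccontr)
      assume nS: "S \<notin> K"
      define Q where "Q = (\<lambda>n. \<exists>C. C \<subseteq> S \<and> C \<notin> K \<and> card C = n)"
      have "Q (card S)" using nS unfolding Q_def by blast
      define n where "n = (LEAST n. Q n)"
      have "Q n" unfolding n_def using \<open>Q (card S)\<close> by (rule LeastI)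
      have least: "\<And>n'. Q n' \<Longrightarrow> n \<le> n'" unfolding n_def by (rule Least_le)
      obtain C where C: "C \<subseteq> S" "C \<notin> K" "card C = n" using \<open>Q n\<close> unfolding Q_def by blast
      have finC: "finite C" by (rule finite_subset[OF subset_trans[OF C(1) S] fin])
      have "C - {x} \<in> K" if "x \<in> C" for x
      proof (rule ccontr)
        assume "C - {x} \<notin> K"
        then have "Q (card (C - {x}))" unfolding Q_def using C(1) by blast
        then have "n \<le> card (C - {x})" by (rule least)
        moreover have "card (C - {x}) < card C" using finC that by (meson card_Diff1_less)
        ultimately show False using C by simp
      qed
      then have "primitive_collection R K C" using C S unfolding primitive_collection_def by auto
      then have "C \<in> P" using prim[of C] by simp
      with H C(1) show False by simp
    qed
  qed
qed


lemma mem_Vs[simp]: "k \<in> Vs p \<longleftrightarrow> (case k of V i \<Rightarrow> 1 \<le> i \<and> i \<le> p | _ \<Rightarrow> False)"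
  by (cases k) (auto simp: Vs_def)
lemma mem_Ys[simp]: "k \<in> Ys p \<longleftrightarrow> (case k of Y i \<Rightarrow> 1 \<le> i \<and> i \<le> p | _ \<Rightarrow> False)"
  by (cases k) (auto simp: Ys_def)
lemma mem_Zs[simp]: "k \<in> Zs p \<longleftrightarrow> (case k of Z i \<Rightarrow> 1 \<le> i \<and> i \<le> p | _ \<Rightarrow> False)"
  by (cases k) (auto simp: Zs_def)
lemma mem_Ts[simp]: "k \<in> Ts p \<longleftrightarrow> (case k of T i \<Rightarrow> 1 \<le> i \<and> i \<le> p | _ \<Rightarrow> False)"
  by (cases k) (auto simp: Ts_def)
lemma mem_Us[simp]: "k \<in> Us p \<longleftrightarrow> (case k of U i \<Rightarrow> 1 \<le> i \<and> i \<le> p | _ \<Rightarrow> False)"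
  by (cases k) (auto simp: Us_def)

lemma finite_allrays: "finite (allrays p0 p1 p2 p3 p4)"
  unfolding allrays_def Vs_def Ys_def Zs_def Ts_def Us_def by simp

lemma sum_allrays:
  "(\<Sum>k\<in>allrays p0 p1 p2 p3 p4. F k) = (\<Sum>i=1..p0. F (V i)) + (\<Sum>i=1..p1. F (Y i)) +
     (\<Sum>i=1..p2. F (Z i)) + (\<Sum>i=1..p3. F (T i)) + (\<Sum>i=1..p4. F (U i))"
proof -
  have "(\<Sum>k\<in>allrays p0 p1 p2 p3 p4. F k) = sum F (Vs p0) + sum F (Ys p1) + sum F (Zs p2) + sum F (Ts p3) + sum F (Us p4)"
  proof -
    have f: "finite (Vs p)" "finite (Ys p)" "finite (Zs p)" "finite (Ts p)" "finite (Us p)" for p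
      unfolding Vs_def Ys_def Zs_def Ts_def Us_def by simp_all
    have d1: "Vs p0 \<inter> Ys p1 = {}" by (auto split: ray.splits)
    have d2: "(Vs p0 \<union> Ys p1) \<inter> Zs p2 = {}" by (auto split: ray.splits)
    have d3: "(Vs p0 \<union> Ys p1 \<union> Zs p2) \<inter> Ts p3 = {}" by (auto split: ray.splits)
    have d4: "(Vs p0 \<union> Ys p1 \<union> Zs p2 \<union> Ts p3) \<inter> Us p4 = {}" by (auto split: ray.splits)
    show ?thesis unfolding allrays_def
      by (simp add: sum.union_disjoint f d1 d2 d3 d4)
  qed
  also have "\<dots> = (\<Sum>i=1..p0. F (V i)) + (\<Sum>i=1..p1. F (Y i)) +
     (\<Sum>i=1..p2. F (Z i)) + (\<Sum>i=1..p3. F (T i)) + (\<Sum>i=1..p4. F (U i))"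
    unfolding Vs_def Ys_def Zs_def Ts_def Us_def
    by (simp add: sum.reindex inj_on_def)
  finally show ?thesis .
qed

lemma extract_rel:
  fixes a x :: "ray \<Rightarrow> int"
  assumes "finite R" "\<sigma> \<subseteq> R" "\<rho> \<in> \<sigma>" "\<forall>j\<in>\<sigma>-{\<rho>}. x j = 0" "x \<rho> = 1"
    and "(\<Sum>k\<in>R. a k * x k) = 0"
  shows "a \<rho> + (\<Sum>k\<in>R-\<sigma>. a k * x k) = 0"
proof -
  have fs: "finite \<sigma>" using assms finite_subset by blast
  have "(\<Sum>k\<in>R. a k * x k) = (\<Sum>k\<in>\<sigma>. a k * x k) + (\<Sum>k\<in>R-\<sigma>. a k * x k)"
    using assms(1,2) by (metis add.commute sum.subset_diff)
  moreover have "(\<Sum>k\<in>\<sigma>. a k * x k) = a \<rho> * x \<rho> + (\<Sum>k\<in>\<sigma>-{\<rho>}. a k * x k)"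
    using fs assms(3) by (simp add: sum.remove)
  moreover have "(\<Sum>k\<in>\<sigma>-{\<rho>}. a k * x k) = 0" using assms(4) by simp
  ultimately show ?thesis using assms by simp
qed

lemma dualm_prop:
  fixes g :: "ray \<Rightarrow> int^'d"
  assumes "unimodular g \<sigma>" "\<rho> \<in> \<sigma>"
  shows "ipair (dualm g \<sigma> \<rho>) (g \<rho>) = 1 \<and> (\<forall>j\<in>\<sigma>-{\<rho>}. ipair (dualm g \<sigma> \<rho>) (g j) = 0)"
proof -
  obtain m where m: "\<forall>k\<in>\<sigma>. \<forall>j\<in>\<sigma>. ipair (m k) (g j) = (if j = k then 1 else 0)"
    using dual_basis[OF assms(1)] by blast
  have "\<exists>m. ipair m (g \<rho>) = 1 \<and> (\<forall>j\<in>\<sigma>-{\<rho>}. ipair m (g j) = 0)"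
    using m assms(2) by (intro exI[of _ "m \<rho>"]) auto
  then show ?thesis unfolding dualm_def by (rule someI_ex)
qed



lemma CD:
  fixes g :: "ray \<Rightarrow> int^'d"
  assumes fan: "smooth_projective_complete_fan R K g"
    and \<gamma>: "\<gamma> \<in> K" and \<rho>: "\<rho> \<in> \<gamma>"
    and a: "\<forall>k\<in>R-\<gamma>. a k = (if insert k \<gamma> \<in> K then 1 else 0)"
    and rel: "\<And>m. (\<Sum>k\<in>R. a k * ipair m (g k)) = 0"
  shows "curve_deg R K g \<gamma> \<rho> = a \<rho>"
proof -
  let ?m = "dualm g \<gamma> \<rho>"
  have dp: "ipair ?m (g \<rho>) = 1 \<and> (\<forall>j\<in>\<gamma>-{\<rho>}. ipair ?m (g j) = 0)"
    by (rule dualm_prop[OF fan_D(6)[OF fan \<gamma>] \<rho>])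
  have e: "a \<rho> + (\<Sum>k\<in>R-\<gamma>. a k * ipair ?m (g k)) = 0"
    by (rule extract_rel[OF fan_D(1)[OF fan] fan_D(4)[OF fan \<gamma>] \<rho>]) (use dp rel in auto)
  have "curve_deg R K g \<gamma> \<rho> = (\<Sum>k\<in>R-\<gamma>. - (a k * ipair ?m (g k)))"
    unfolding curve_deg_def
    by (rule sum.cong) (use \<rho> a in \<open>auto simp: restr_def\<close>)
  also have "\<dots> = a \<rho>" using e by (simp add: sum_negf)
  finally show ?thesis .
qed

lemma ins_diff: "k \<in> R \<Longrightarrow> insert k (R - E) = R - (E - {k})" by auto

theorem mainTheorem6:
  fixes p0 p1 p2 p3 p4 :: nat
    and g :: "ray \<Rightarrow> int^'d"
    and K :: "ray set set"
    and b c :: "nat \<Rightarrow> int"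
  assumes pos: "p0 \<ge> 1" "p1 \<ge> 1" "p2 \<ge> 1" "p3 \<ge> 1" "p4 \<ge> 1"
    and dim: "CARD('d) = p0 + p1 + p2 + p3 + p4 - 3"
    and fan: "smooth_projective_complete_fan (allrays p0 p1 p2 p3 p4) K g"
    and prim: "\<And>C. primitive_collection (allrays p0 p1 p2 p3 p4) K C \<longleftrightarrow>
                 C \<in> {Vs p0 \<union> Ys p1, Ys p1 \<union> Zs p2, Zs p2 \<union> Ts p3, Ts p3 \<union> Us p4, Us p4 \<union> Vs p0}"
    and bnn: "\<And>i. b i \<ge> 0" and cnn: "\<And>j. c j \<ge> 0"
    and cmin: "\<forall>j\<in>{2..p2}. c 2 \<le> c j"
    and bmin: "\<forall>i\<in>{1..p3}. b 1 \<le> b i"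
    and r1: "(\<Sum>i=1..p0. g (V i)) + (\<Sum>j=1..p1. g (Y j)) =
             (\<Sum>j=2..p2. c j *s g (Z j)) + (\<Sum>i=1..p3. (b i + 1) *s g (T i))"
    and r2: "(\<Sum>j=1..p1. g (Y j)) + (\<Sum>j=1..p2. g (Z j)) = (\<Sum>j=1..p4. g (U j))"
    and r3: "(\<Sum>j=1..p2. g (Z j)) + (\<Sum>j=1..p3. g (T j)) = 0"
    and r4: "(\<Sum>j=1..p3. g (T j)) + (\<Sum>j=1..p4. g (U j)) = (\<Sum>j=1..p1. g (Y j))"
    and r5: "(\<Sum>j=1..p4. g (U j)) + (\<Sum>i=1..p0. g (V i)) =
             (\<Sum>j=2..p2. c j *s g (Z j)) + (\<Sum>i=1..p3. b i *s g (T i))"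
    and p2ge: "p2 \<ge> 2" and p3ge: "p3 \<ge> 2"
  shows "let \<tau> = allrays p0 p1 p2 p3 p4 - {V 1, Z 1, Z 2, T 1, T 2} in
           \<tau> \<in> K \<and> surface_is_P1xP1 (allrays p0 p1 p2 p3 p4) K g \<tau> \<and>
           ch2_dot (allrays p0 p1 p2 p3 p4) K g \<tau> = - real (p1 + p4) \<and>
           ch2_dot (allrays p0 p1 p2 p3 p4) K g \<tau> < 0"
proof -
  define R where "R = allrays p0 p1 p2 p3 p4"
  define E0 where "E0 = {V 1, Z 1, Z 2, T 1, T 2}"
  define \<tau> where "\<tau> = R - E0"
  note fanR = fan[folded R_def]
  have finR: "finite R" by (rule fan_D(1)[OF fanR])
  have memR: "V 1 \<in> R" "Z 1 \<in> R" "Z 2 \<in> R" "T 1 \<in> R" "T 2 \<in> R"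
    using pos p2ge p3ge by (simp_all add: R_def allrays_def)
  have E0R: "E0 \<subseteq> R" using memR by (simp add: E0_def)
  have subR: "Vs p0 \<subseteq> R" "Ys p1 \<subseteq> R" "Zs p2 \<subseteq> R" "Ts p3 \<subseteq> R" "Us p4 \<subseteq> R"
    by (auto simp: R_def allrays_def)
  have inG: "V 1 \<in> Vs p0" "Z 1 \<in> Zs p2" "Z 2 \<in> Zs p2" "T 1 \<in> Ts p3" "T 2 \<in> Ts p3"
    using pos p2ge p3ge by simp_all
  have Kmem: "R - E \<in> K \<longleftrightarrow> V 1 \<in> E \<and> (Z 1 \<in> E \<or> Z 2 \<in> E) \<and> (T 1 \<in> E \<or> T 2 \<in> E)"
    if E: "E \<subseteq> E0" for E
  proof -
    have KK: "R - E \<in> K \<longleftrightarrow> (\<forall>C\<in>{Vs p0 \<union> Ys p1, Ys p1 \<union> Zs p2, Zs p2 \<union> Ts p3, Ts p3 \<union> Us p4, Us p4 \<union> Vs p0}. \<not> C \<subseteq> R - E)"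
      by (rule Kchar[OF fanR prim[folded R_def]]) auto
    have si: "C \<subseteq> R \<Longrightarrow> (C \<subseteq> R - E \<longleftrightarrow> (\<forall>x\<in>E0. x \<in> E \<longrightarrow> x \<notin> C))" for C
      using E by blast
    have u: "Vs p0 \<union> Ys p1 \<subseteq> R" "Ys p1 \<union> Zs p2 \<subseteq> R" "Zs p2 \<union> Ts p3 \<subseteq> R" "Ts p3 \<union> Us p4 \<subseteq> R" "Us p4 \<union> Vs p0 \<subseteq> R"
      using subR by auto
    note s = si[OF subR(1)] si[OF subR(2)] si[OF subR(3)] si[OF subR(4)] si[OF subR(5)]
    show ?thesis using pos p2ge p3ge by (simp add: KK s E0_def) blast
  qed

  have tauK: "\<tau> \<in> K" using Kmem[of E0] by (simp add: E0_def \<tau>_def)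
  have RtE: "R - \<tau> = E0" using E0R unfolding \<tau>_def by auto
  define a2 :: "ray \<Rightarrow> int" where "a2 = (\<lambda>k. case k of Y _ \<Rightarrow> 1 | Z _ \<Rightarrow> 1 | U _ \<Rightarrow> -1 | _ \<Rightarrow> 0)"
  define a4 :: "ray \<Rightarrow> int" where "a4 = (\<lambda>k. case k of T _ \<Rightarrow> 1 | U _ \<Rightarrow> 1 | Y _ \<Rightarrow> -1 | _ \<Rightarrow> 0)"
  have rel2: "(\<Sum>k\<in>R. a2 k * ipair m (g k)) = 0" for m
  proof -
    have "ipair m ((\<Sum>j=1..p1. g (Y j)) + (\<Sum>j=1..p2. g (Z j))) = ipair m (\<Sum>j=1..p4. g (U j))"
      using r2 by simp
    then have "(\<Sum>j=1..p1. ipair m (g (Y j))) + (\<Sum>j=1..p2. ipair m (g (Z j))) = (\<Sum>j=1..p4. ipair m (g (U j)))"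
      by (simp add: ipair_add ipair_sum)
    then show ?thesis unfolding R_def sum_allrays by (simp add: a2_def sum_negf)
  qed
  have rel4: "(\<Sum>k\<in>R. a4 k * ipair m (g k)) = 0" for m
  proof -
    have "ipair m ((\<Sum>j=1..p3. g (T j)) + (\<Sum>j=1..p4. g (U j))) = ipair m (\<Sum>j=1..p1. g (Y j))"
      using r4 by simp
    then have "(\<Sum>j=1..p3. ipair m (g (T j))) + (\<Sum>j=1..p4. ipair m (g (U j))) = (\<Sum>j=1..p1. ipair m (g (Y j)))"
      by (simp add: ipair_add ipair_sum)
    then show ?thesis unfolding R_def sum_allrays by (simp add: a4_def sum_negf)
  qed
  have insE: "insert k (R - E) = R - (E - {k})" if "k \<in> R" for k E using that by auto
  have RRE: "R - (R - E) = E" if "E \<subseteq> R" for E using that by auto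
  have tauE: "\<tau> = R - E0" by (simp add: \<tau>_def)
  have cdZ: "curve_deg R K g (insert z \<tau>) \<rho> = a4 \<rho>" if z: "z = Z 1 \<or> z = Z 2" and \<rho>: "\<rho> \<in> insert z \<tau>" for z \<rho>
  proof (rule CD[OF fanR _ \<rho> _ rel4])
    have zR: "z \<in> R" using z memR by auto
    show "insert z \<tau> \<in> K" using z by (elim disjE) (simp_all add: tauE insE memR[simplified] Kmem E0_def)
    show "\<forall>k\<in>R - insert z \<tau>. a4 k = (if insert k (insert z \<tau>) \<in> K then 1 else 0)"
      using z by (elim disjE) (simp_all add: tauE insE memR[simplified] Kmem E0_def RRE a4_def insert_Diff_if)
  qed
  have cdT: "curve_deg R K g (insert z \<tau>) \<rho> = a2 \<rho>" if z: "z = T 1 \<or> z = T 2" and \<rho>: "\<rho> \<in> insert z \<tau>" for z \<rho>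
  proof (rule CD[OF fanR _ \<rho> _ rel2])
    have zR: "z \<in> R" using z memR by auto
    show "insert z \<tau> \<in> K" using z by (elim disjE) (simp_all add: tauE insE memR[simplified] Kmem E0_def)
    show "\<forall>k\<in>R - insert z \<tau>. a2 k = (if insert k (insert z \<tau>) \<in> K then 1 else 0)"
      using z by (elim disjE) (simp_all add: tauE insE memR[simplified] Kmem E0_def RRE a2_def insert_Diff_if)
  qed

  have avals: "a2 (V 1) = 0" "a2 (Z 1) = 1" "a2 (Z 2) = 1" "a2 (T 1) = 0" "a2 (T 2) = 0"
    "a4 (V 1) = 0" "a4 (Z 1) = 0" "a4 (Z 2) = 0" "a4 (T 1) = 1" "a4 (T 2) = 1"
    by (simp_all add: a2_def a4_def)
  have insK: "insert (V 1) \<tau> \<notin> K" "insert (Z 1) \<tau> \<in> K" "insert (Z 2) \<tau> \<in> K"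
    "insert (T 1) \<tau> \<in> K" "insert (T 2) \<tau> \<in> K"
    by (simp_all add: tauE insE memR[simplified] Kmem E0_def insert_Diff_if)
  have finE0: "finite E0" by (simp add: E0_def)
  have st: "surf_int R K g \<tau> \<rho> \<rho> = 2 * a2 \<rho> * a4 \<rho>" if \<rho>R: "\<rho> \<in> R" for \<rho>
  proof (cases "\<rho> \<in> \<tau>")
    case True
    let ?m = "dualm g \<tau> \<rho>"
    let ?x = "\<lambda>k. ipair ?m (g k)"
    have dp: "ipair ?m (g \<rho>) = 1 \<and> (\<forall>j\<in>\<tau>-{\<rho>}. ipair ?m (g j) = 0)"
      by (rule dualm_prop[OF fan_D(6)[OF fanR tauK] True])
    have e2: "a2 \<rho> + (\<Sum>k\<in>E0. a2 k * ?x k) = 0"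
      using extract_rel[OF finR fan_D(4)[OF fanR tauK] True, of ?x a2] dp rel2 RtE by auto
    have e4: "a4 \<rho> + (\<Sum>k\<in>E0. a4 k * ?x k) = 0"
      using extract_rel[OF finR fan_D(4)[OF fanR tauK] True, of ?x a4] dp rel4 RtE by auto
    have ez: "?x (Z 1) + ?x (Z 2) = - a2 \<rho>" using e2 by (simp add: E0_def avals[simplified])
    have et: "?x (T 1) + ?x (T 2) = - a4 \<rho>" using e4 by (simp add: E0_def avals[simplified])
    have "surf_int R K g \<tau> \<rho> \<rho> = (\<Sum>k\<in>E0. - ?x k * (if insert k \<tau> \<in> K then curve_deg R K g (insert k \<tau>) \<rho> else 0))"
      unfolding surf_int_def RtE by (rule sum.cong) (use True RtE in \<open>auto simp: restr_def\<close>)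
    also have "\<dots> = - ?x (Z 1) * a4 \<rho> - ?x (Z 2) * a4 \<rho> - ?x (T 1) * a2 \<rho> - ?x (T 2) * a2 \<rho>"
      using True by (simp add: E0_def insK[simplified] cdZ cdT)
    also have "\<dots> = - ((?x (Z 1) + ?x (Z 2)) * a4 \<rho>) - ((?x (T 1) + ?x (T 2)) * a2 \<rho>)"
      by (simp add: algebra_simps)
    also have "\<dots> = 2 * a2 \<rho> * a4 \<rho>" unfolding ez et by simp
    finally show ?thesis .
  next
    case False
    then have \<rho>E: "\<rho> \<in> E0" using \<rho>R RtE by blast
    let ?F = "\<lambda>k. if insert k \<tau> \<in> K then curve_deg R K g (insert k \<tau>) \<rho> else 0"
    have "surf_int R K g \<tau> \<rho> \<rho> = (\<Sum>k\<in>E0. (if k = \<rho> then ?F k else 0))"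
      unfolding surf_int_def RtE by (rule sum.cong) (use False in \<open>auto simp: restr_def\<close>)
    also have "\<dots> = ?F \<rho>" using \<rho>E finE0 by (simp add: sum.delta)
    also have "\<dots> = 2 * a2 \<rho> * a4 \<rho>"
      using \<rho>E unfolding E0_def by (auto simp: insK[simplified] cdZ cdT avals[simplified])
    finally show ?thesis .
  qed
  have ch2: "ch2_dot R K g \<tau> = - real (p1 + p4)"
  proof -
    have "(\<Sum>\<rho>\<in>R. real_of_int (surf_int R K g \<tau> \<rho> \<rho>)) = (\<Sum>\<rho>\<in>R. 2 * real_of_int (a2 \<rho> * a4 \<rho>))"
      by (rule sum.cong) (simp_all add: st mult.assoc)
    also have "\<dots> = 2 * real_of_int (\<Sum>\<rho>\<in>R. a2 \<rho> * a4 \<rho>)"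
      by (simp add: sum_distrib_left)
    also have "(\<Sum>\<rho>\<in>R. a2 \<rho> * a4 \<rho>) = - int p1 - int p4"
      unfolding R_def sum_allrays by (simp add: a2_def a4_def)
    finally show ?thesis unfolding ch2_dot_def by simp
  qed

  define \<sigma> where "\<sigma> = R - {V 1, Z 2, T 2}"
  have \<sigma>K: "\<sigma> \<in> K" unfolding \<sigma>_def by (subst Kmem) (simp_all add: E0_def)
  have \<sigma>R: "\<sigma> \<subseteq> R" unfolding \<sigma>_def by blast
  have cardR: "card R = p0 + p1 + p2 + p3 + p4"
    unfolding card_eq_sum R_def sum_allrays by simp
  have card\<sigma>: "card \<sigma> = CARD('d)"
  proof -
    have "card \<sigma> = card R - card {V 1, Z 2, T 2}"
      unfolding \<sigma>_def by (rule card_Diff_subset) (use memR in auto)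
    then show ?thesis using cardR dim by simp
  qed
  obtain m where mdual: "\<forall>k\<in>\<sigma>. \<forall>j\<in>\<sigma>. ipair (m k) (g j) = (if j = k then 1 else 0)"
    and mspan: "\<forall>v. v = (\<Sum>k\<in>\<sigma>. ipair (m k) v *s g k)"
    using dual_basis[OF fan_D(6)[OF fanR \<sigma>K]] card\<sigma> by blast
  have \<sigma>eq: "\<sigma> = insert (Z 1) (insert (T 1) \<tau>)" using memR unfolding \<sigma>_def tauE E0_def by auto
  have Z1\<sigma>: "Z 1 \<in> \<sigma>" and T1\<sigma>: "T 1 \<in> \<sigma>" and \<tau>\<sigma>: "\<tau> \<subseteq> \<sigma>" unfolding \<sigma>eq by auto
  have nt: "Z 1 \<notin> \<tau>" "T 1 \<notin> \<tau>" unfolding tauE E0_def by auto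
  have v0: "ipair (m (Z 1)) (g (Z 1)) = 1" "ipair (m (Z 1)) (g (T 1)) = 0"
       "ipair (m (T 1)) (g (Z 1)) = 0" "ipair (m (T 1)) (g (T 1)) = 1"
    using mdual Z1\<sigma> T1\<sigma> by auto
  have vt: "ipair (m (Z 1)) (g k) = 0" "ipair (m (T 1)) (g k) = 0" if "k \<in> \<tau>" for k
    using mdual Z1\<sigma> T1\<sigma> \<tau>\<sigma> that nt by auto
  have Rs: "R - \<sigma> = {V 1, Z 2, T 2}" using memR unfolding \<sigma>_def by auto
  have ex: "a \<rho> + (\<Sum>k\<in>{V 1, Z 2, T 2}. a k * ipair (m \<rho>) (g k)) = 0"
    if "\<rho> \<in> \<sigma>" "\<And>m. (\<Sum>k\<in>R. a k * ipair m (g k)) = 0" for \<rho> a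
    using extract_rel[OF finR \<sigma>R that(1), of "\<lambda>k. ipair (m \<rho>) (g k)" a] mdual that Rs by auto
  have w: "ipair (m (Z 1)) (g (Z 2)) = -1" "ipair (m (T 1)) (g (Z 2)) = 0"
      "ipair (m (Z 1)) (g (T 2)) = 0" "ipair (m (T 1)) (g (T 2)) = -1"
    using ex[OF Z1\<sigma> rel2] ex[OF T1\<sigma> rel2] ex[OF Z1\<sigma> rel4] ex[OF T1\<sigma> rel4]
    by (simp_all add: avals[simplified])
  note v0s = v0[simplified] w[simplified]
  have injR: "inj_on g R" by (rule fan_D(2)[OF fanR])
  have inj\<tau>: "inj_on g \<tau>" using injR unfolding tauE by (rule inj_on_subset) blast
  have fin\<tau>: "finite \<tau>" using finR unfolding tauE by simp
  have ker: "{v. (ipair (m (Z 1)) v, ipair (m (T 1)) v) = (0,0)} = zspan (g ` \<tau>)"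
  proof (intro set_eqI iffI)
    fix v assume "v \<in> {v. (ipair (m (Z 1)) v, ipair (m (T 1)) v) = (0,0)}"
    then have h: "ipair (m (Z 1)) v = 0" "ipair (m (T 1)) v = 0" by auto
    have "v = (\<Sum>k\<in>\<sigma>. ipair (m k) v *s g k)" using mspan by blast
    also have "\<dots> = (\<Sum>k\<in>\<tau>. ipair (m k) v *s g k)"
      unfolding \<sigma>eq using fin\<tau> nt h by simp
    also have "\<dots> = (\<Sum>a\<in>g ` \<tau>. ipair (m (inv_into \<tau> g a)) v *s a)"
      by (simp add: sum.reindex[OF inj\<tau>] inv_into_f_f[OF inj\<tau>])
    finally have vv: "v = (\<Sum>a\<in>g ` \<tau>. ipair (m (inv_into \<tau> g a)) v *s a)" .
    show "v \<in> zspan (g ` \<tau>)" unfolding zspan_def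
      by (rule CollectI, rule exI[of _ "\<lambda>a. ipair (m (inv_into \<tau> g a)) v"]) (use vv in simp)
  next
    fix v assume "v \<in> zspan (g ` \<tau>)"
    then obtain c where c: "v = (\<Sum>a\<in>g ` \<tau>. c a *s a)" unfolding zspan_def by blast
    have "ipair (m (Z 1)) v = 0" "ipair (m (T 1)) v = 0"
      unfolding c ipair_sum ipair_scale by (auto intro!: sum.neutral simp: vt[simplified])
    then show "v \<in> {v. (ipair (m (Z 1)) v, ipair (m (T 1)) v) = (0,0)}" by simp
  qed
  have star: "{k\<in>R - \<tau>. insert k \<tau> \<in> K} = {Z 1, Z 2, T 1, T 2}"
    unfolding RtE using insK by (auto simp: E0_def)
  have pairE: "{k, k'} \<union> \<tau> = R - (E0 - {k, k'})" if "k \<in> R" "k' \<in> R" for k k'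
    using that unfolding tauE by auto
  have surf: "surface_is_P1xP1 R K g \<tau>"
    unfolding surface_is_P1xP1_def Let_def
  proof (rule conjI[OF tauK], rule exI[of _ "m (Z 1)"], rule exI[of _ "m (T 1)"], intro conjI)
    show "\<forall>w. \<exists>v. (ipair (m (Z 1)) v, ipair (m (T 1)) v) = w"
    proof
      fix w :: "int \<times> int"
      obtain a b where w: "w = (a, b)" by (cases w)
      show "\<exists>v. (ipair (m (Z 1)) v, ipair (m (T 1)) v) = w"
        by (rule exI[of _ "a *s g (Z 1) + b *s g (T 1)"]) (simp add: w ipair_add ipair_scale v0s)
    qed
    show "{v. (ipair (m (Z 1)) v, ipair (m (T 1)) v) = (0, 0)} = zspan (g ` \<tau>)" by (rule ker)
    show "bij_betw ((\<lambda>v. (ipair (m (Z 1)) v, ipair (m (T 1)) v)) \<circ> g) {k \<in> R - \<tau>. insert k \<tau> \<in> K}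
       {(1, 0), (0, 1), (- 1, 0), (0, - 1)}"
      unfolding star using v0s by (auto simp: bij_betw_def inj_on_def)
    show "\<forall>k\<in>{k \<in> R - \<tau>. insert k \<tau> \<in> K}. \<forall>k'\<in>{k \<in> R - \<tau>. insert k \<tau> \<in> K}. k \<noteq> k' \<longrightarrow>
       ({k, k'} \<union> \<tau> \<in> K) = ((ipair (m (Z 1)) (g k), ipair (m (T 1)) (g k)) \<noteq>
                             - (ipair (m (Z 1)) (g k'), ipair (m (T 1)) (g k')))"
      unfolding star using v0s
      by (simp add: tauE insE memR[simplified] Kmem E0_def insert_Diff_if)
  qed
  have teq: "allrays p0 p1 p2 p3 p4 - {V 1, Z 1, Z 2, T 1, T 2} = \<tau>" by (simp add: \<tau>_def R_def E0_def)
  show ?thesis unfolding Let_def teq unfolding R_def[symmetric] using tauK surf ch2 pos by simp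
qed

end
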